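(* Let $(\Omega,\mathcal F,\mu)$ be a finite measure space, $p\in[1,\infty)$ and $k\ge1$. Then $\mathscr G_{p,k}$ is proximinal in $L^p(\Omega,\mathcal F,\mu)$. Moreover, let $f\in L^p$ and let $g=\sum_{i=1}^q b_i\mathbf 1_{A_i}$ be a minimizer ($\|f-g\|_p=\mathscr D_{p,k}(f)$) with $q\le k$, $b_1<\dots<b_q$ real, and $\{A_i\}_{1\le i\le q}$ a measurable partition of $\Omega$ with $\mu(A_i)>0$ for all $i$. Put $r_1=-\infty$, $r_{q+1}=+\infty$, $r_i=\frac{b_{i-1}+b_i}{2}$ for $2\le i\le q$, and $C_i=f^{-1}([r_i,r_{i+1}))$ for $1\le i\le q$. Then $\sum_{i=1}^q b_i\mathbf 1_{C_i}$ is a minimizer; for each $i$ with $\mu(C_i)>0$, $b_i$ is a $p$-th mean of $f$ on $C_i$; and $\tilde g=\sum_{i=1}^q\mathcal M_p(f,C_i)\mathbf 1_{C_i}$ is also a minimizer in $\mathscr G_{p,q}$. If $q$ is the smallest number of distinct values among all minimizers, then $\mu(C_i)>0$ for all $i$.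
   Context: $\mathscr G_{p,k}$ is the set of functions $\sum_{i=1}^l a_i\mathbf 1_{A_i}\in L^p$ with $l\le k$, $\{A_i\}$ a measurable partition of $\Omega$, $a_i\in\mathbb R$; $\mathscr D_{p,k}(f)=\inf\{\|f-h\|_p:\ h\in\mathscr G_{p,k}\}$; a minimizer is any $g\in\mathscr G_{p,k}$ with $\|f-g\|_p=\mathscr D_{p,k}(f)$; $\mathscr G_{p,k}$ is proximinal if minimizers exist for every $f\in L^p$. $p$-th mean: for measurable $A$ with $0<\mu(A)<\infty$, a $p$-th mean of $f$ on $A$ is any minimizer over $a\in\mathbb R$ of $\int_A|f-a|^p\,d\mu$; for $p>1$ it is unique and denoted $\mathcal M_p(f,A)$; for $p=1$ the minimizers form a bounded closed interval $[a^*,b^*]$ and $\mathcal M_1(f,A)=(a^*+b^* )/2$; if $\mu(A)=0$, $\mathcal M_p(f,A)=0$. *)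

theory Defs
  imports "HOL-Analysis.Analysis"
begin

definition in_Lp :: "'a measure \<Rightarrow> real \<Rightarrow> ('a \<Rightarrow> real) \<Rightarrow> bool" where
  "in_Lp M p f \<longleftrightarrow> f \<in> borel_measurable M \<and> integrable M (\<lambda>x. \<bar>f x\<bar> powr p)"

definition lpnorm :: "'a measure \<Rightarrow> real \<Rightarrow> ('a \<Rightarrow> real) \<Rightarrow> real" where
  "lpnorm M p f = (\<integral>x. \<bar>f x\<bar> powr p \<partial>M) powr (1 / p)"

definition is_partition :: "'a measure \<Rightarrow> nat \<Rightarrow> (nat \<Rightarrow> 'a set) \<Rightarrow> bool" where
  "is_partition M l A \<longleftrightarrow>
     (\<forall>i\<in>{1..l}. A i \<in> sets M) \<and>
     (\<forall>i\<in>{1..l}. \<forall>j\<in>{1..l}. i \<noteq> j \<longrightarrow> A i \<inter> A j = {}) \<and>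
     (\<Union>i\<in>{1..l}. A i) = space M"

definition Gset :: "'a measure \<Rightarrow> real \<Rightarrow> nat \<Rightarrow> ('a \<Rightarrow> real) set" where
  "Gset M p k = {h. in_Lp M p h \<and>
     (\<exists>l a A. l \<le> k \<and> is_partition M l A \<and> h = (\<lambda>x. \<Sum>i=1..l. a i * indicator (A i) x))}"

definition Dpk :: "'a measure \<Rightarrow> real \<Rightarrow> nat \<Rightarrow> ('a \<Rightarrow> real) \<Rightarrow> real" where
  "Dpk M p k f = Inf ((\<lambda>h. lpnorm M p (\<lambda>x. f x - h x)) ` Gset M p k)"

definition is_minimizer :: "'a measure \<Rightarrow> real \<Rightarrow> nat \<Rightarrow> ('a \<Rightarrow> real) \<Rightarrow> ('a \<Rightarrow> real) \<Rightarrow> bool" where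
  "is_minimizer M p k f g \<longleftrightarrow> g \<in> Gset M p k \<and> lpnorm M p (\<lambda>x. f x - g x) = Dpk M p k f"

definition proximinal :: "'a measure \<Rightarrow> real \<Rightarrow> nat \<Rightarrow> bool" where
  "proximinal M p k \<longleftrightarrow> (\<forall>f. in_Lp M p f \<longrightarrow> (\<exists>g. is_minimizer M p k f g))"

definition is_pth_mean :: "'a measure \<Rightarrow> real \<Rightarrow> ('a \<Rightarrow> real) \<Rightarrow> 'a set \<Rightarrow> real \<Rightarrow> bool" where
  "is_pth_mean M p f A a \<longleftrightarrow>
     (\<forall>c. (LINT x:A|M. \<bar>f x - a\<bar> powr p) \<le> (LINT x:A|M. \<bar>f x - c\<bar> powr p))"

definition Mp :: "'a measure \<Rightarrow> real \<Rightarrow> ('a \<Rightarrow> real) \<Rightarrow> 'a set \<Rightarrow> real" where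
  "Mp M p f A =
     (if measure M A = 0 then 0
      else if p = 1 then (Inf {a. is_pth_mean M p f A a} + Sup {a. is_pth_mean M p f A a}) / 2
      else (THE a. is_pth_mean M p f A a))"

definition thr :: "(nat \<Rightarrow> real) \<Rightarrow> nat \<Rightarrow> nat \<Rightarrow> ereal" where
  "thr b q i = (if i = 1 then -\<infinity> else if i = q + 1 then \<infinity> else ereal ((b (i - 1) + b i) / 2))"

definition Cset :: "'a measure \<Rightarrow> ('a \<Rightarrow> real) \<Rightarrow> (nat \<Rightarrow> real) \<Rightarrow> nat \<Rightarrow> nat \<Rightarrow> 'a set" where
  "Cset M f b q i = {x \<in> space M. thr b q i \<le> ereal (f x) \<and> ereal (f x) < thr b q (i + 1)}"

end

theory Submission
  imports Defs
begin


lemma part_sets: "is_partition M l A \<Longrightarrow> i \<in> {1..l} \<Longrightarrow> A i \<in> sets M"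
  by (simp add: is_partition_def)

lemma part_ex: "is_partition M l A \<Longrightarrow> x \<in> space M \<Longrightarrow> \<exists>j\<in>{1..l}. x \<in> A j"
  unfolding is_partition_def by blast

lemma part_eval:
  assumes "is_partition M l A" "j \<in> {1..l}" "x \<in> A j"
  shows "(\<Sum>i=1..l. a i * indicator (A i) x) = (a j :: real)"
proof -
  have "(\<Sum>i=1..l. a i * indicator (A i) x) = (\<Sum>i=1..l. if i = j then a j else 0)"
  proof (rule sum.cong)
    fix i assume i: "i \<in> {1..l}"
    show "a i * indicator (A i) x = (if i = j then a j else 0)"
    proof (cases "i = j")
      case True then show ?thesis using assms by simp
    next
      case False
      then have "A i \<inter> A j = {}" using assms i unfolding is_partition_def by blast
      then show ?thesis using False assms by (auto simp: indicator_def)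
    qed
  qed simp
  also have "\<dots> = a j" using assms(2) by simp
  finally show ?thesis .
qed

lemma part_eval_space:
  assumes "is_partition M l A" "x \<in> space M"
  shows "\<exists>j\<in>{1..l}. x \<in> A j \<and> (\<Sum>i=1..l. a i * indicator (A i) x) = (a j :: real)"
  using part_ex[OF assms] part_eval[OF assms(1)] by blast

lemma part_meas:
  assumes "is_partition M l A"
  shows "(\<lambda>x. \<Sum>i=1..l. a i * indicator (A i) x :: real) \<in> borel_measurable M"
  using part_sets[OF assms] by (intro borel_measurable_sum) (auto intro: borel_measurable_indicator)

lemma part_bound:
  assumes "is_partition M l A"
  shows "\<bar>\<Sum>i=1..l. a i * indicator (A i) x :: real\<bar> \<le> (\<Sum>i=1..l. \<bar>a i\<bar>)"
proof -
  have "\<bar>\<Sum>i=1..l. a i * indicator (A i) x :: real\<bar> \<le> (\<Sum>i=1..l. \<bar>a i * indicator (A i) x\<bar>)"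
    by (rule sum_abs)
  also have "\<dots> \<le> (\<Sum>i=1..l. \<bar>a i\<bar>)"
    by (intro sum_mono) (auto simp: indicator_def abs_mult)
  finally show ?thesis .
qed

lemma bounded_Lp:
  assumes "finite_measure M" "h \<in> borel_measurable M" "\<And>x. x \<in> space M \<Longrightarrow> \<bar>h x\<bar> \<le> B" "0 \<le> p"
  shows "in_Lp M p h"
  unfolding in_Lp_def
proof (intro conjI)
  show "h \<in> borel_measurable M" by fact
  show "integrable M (\<lambda>x. \<bar>h x\<bar> powr p)"
  proof (rule finite_measure.integrable_const_bound[where B="B powr p"])
    show "finite_measure M" by fact
    show "AE x in M. norm (\<bar>h x\<bar> powr p) \<le> B powr p"
      using assms(3) by (intro AE_I2) (auto intro: powr_mono2 assms(4))
    show "(\<lambda>x. \<bar>h x\<bar> powr p) \<in> borel_measurable M" using assms(2) by measurable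
  qed
qed

lemma part_Lp:
  assumes "finite_measure M" "is_partition M l A" "0 \<le> p"
  shows "in_Lp M p (\<lambda>x. \<Sum>i=1..l. a i * indicator (A i) x)"
  by (rule bounded_Lp[OF assms(1) part_meas[OF assms(2)] part_bound[OF assms(2)] assms(3)])

lemma part_Gset:
  assumes "finite_measure M" "is_partition M l A" "0 \<le> p" "l \<le> k"
  shows "(\<lambda>x. \<Sum>i=1..l. a i * indicator (A i) x) \<in> Gset M p k"
  unfolding Gset_def using part_Lp[OF assms(1-3)] assms(2,4) by blast

lemma powr_sum_bound:
  fixes u v p :: real
  assumes "0 \<le> u" "0 \<le> v" "1 \<le> p"
  shows "(u+v) powr p \<le> 2 powr p * (u powr p + v powr p)"
proof -
  have "(u+v) powr p \<le> (2 * max u v) powr p"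
    using assms by (intro powr_mono2) auto
  also have "\<dots> = 2 powr p * max u v powr p"
    using assms by (simp add: powr_mult)
  also have "max u v powr p \<le> u powr p + v powr p"
    by (simp add: max_def)
  then have "2 powr p * max u v powr p \<le> 2 powr p * (u powr p + v powr p)"
    by (intro mult_left_mono) auto
  finally show ?thesis .
qed

lemma Lp_diff_int:
  assumes "in_Lp M p f" "in_Lp M p g" "1 \<le> p"
  shows "integrable M (\<lambda>x. \<bar>f x - g x\<bar> powr p)"
proof (rule Bochner_Integration.integrable_bound)
  show "integrable M (\<lambda>x. 2 powr p * (\<bar>f x\<bar> powr p + \<bar>g x\<bar> powr p))"
    using assms unfolding in_Lp_def by auto
  show "(\<lambda>x. \<bar>f x - g x\<bar> powr p) \<in> borel_measurable M"
  proof -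
    have [measurable]: "f \<in> borel_measurable M" "g \<in> borel_measurable M" using assms unfolding in_Lp_def by auto
    show ?thesis by measurable
  qed
  show "AE x in M. norm (\<bar>f x - g x\<bar> powr p) \<le> norm (2 powr p * (\<bar>f x\<bar> powr p + \<bar>g x\<bar> powr p))"
  proof (intro AE_I2)
    fix x
    have "\<bar>f x - g x\<bar> powr p \<le> (\<bar>f x\<bar> + \<bar>g x\<bar>) powr p"
      using assms(3) by (intro powr_mono2) auto
    also have "\<dots> \<le> 2 powr p * (\<bar>f x\<bar> powr p + \<bar>g x\<bar> powr p)"
      using assms(3) by (intro powr_sum_bound) auto
    finally show "norm (\<bar>f x - g x\<bar> powr p) \<le> norm (2 powr p * (\<bar>f x\<bar> powr p + \<bar>g x\<bar> powr p))"
      by simp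
  qed
qed

lemma const_Lp: "finite_measure M \<Longrightarrow> 0 \<le> p \<Longrightarrow> in_Lp M p (\<lambda>x. c)"
  by (rule bounded_Lp[where B="\<bar>c\<bar>"]) auto

lemma lpnorm_nonneg: "0 \<le> lpnorm M p f"
  by (simp add: lpnorm_def)

lemma lpnorm_le_iff:
  fixes f g :: "'a \<Rightarrow> real"
  assumes "0 \<le> integral\<^sup>L M (\<lambda>x. \<bar>f x\<bar> powr p)" "0 \<le> integral\<^sup>L M (\<lambda>x. \<bar>g x\<bar> powr p)" "0 < p"
  shows "lpnorm M p f \<le> lpnorm M p g \<longleftrightarrow> integral\<^sup>L M (\<lambda>x. \<bar>f x\<bar> powr p) \<le> integral\<^sup>L M (\<lambda>x. \<bar>g x\<bar> powr p)"
  unfolding lpnorm_def using assms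
  by (metis linorder_not_le powr_less_mono2 powr_mono2 zero_le_divide_1_iff less_imp_le divide_pos_pos zero_less_one)

lemma int_powr_nonneg: "0 \<le> integral\<^sup>L M (\<lambda>x. \<bar>f x::real\<bar> powr p)"
  by (rule Bochner_Integration.integral_nonneg) simp

lemma minimizerI:
  assumes "g \<in> Gset M p k" "\<And>h. h \<in> Gset M p k \<Longrightarrow> lpnorm M p (\<lambda>x. f x - g x) \<le> lpnorm M p (\<lambda>x. f x - h x)"
  shows "is_minimizer M p k f g"
  unfolding is_minimizer_def Dpk_def using assms
  by (intro conjI cInf_eq_minimum[symmetric]) auto

lemma minimizerD:
  assumes "is_minimizer M p k f g" "h \<in> Gset M p k"
  shows "lpnorm M p (\<lambda>x. f x - g x) \<le> lpnorm M p (\<lambda>x. f x - h x)"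
proof -
  have "Dpk M p k f \<le> lpnorm M p (\<lambda>x. f x - h x)"
    unfolding Dpk_def using assms(2)
    by (intro cInf_lower) (auto intro: bdd_belowI[where m=0] simp: lpnorm_nonneg)
  then show ?thesis using assms(1) unfolding is_minimizer_def by simp
qed

definition Fk :: "nat \<Rightarrow> ('a \<Rightarrow> real) \<Rightarrow> real \<Rightarrow> (nat \<Rightarrow> real) \<Rightarrow> 'a \<Rightarrow> real" where
  "Fk k f p a x = (Min ((\<lambda>i. \<bar>f x - a i\<bar>) ` {1..k})) powr p"

lemma Min_abs_nonneg: "1 \<le> k \<Longrightarrow> 0 \<le> Min ((\<lambda>i. \<bar>f x - a i\<bar>) ` {1..(k::nat)}) \<Longrightarrow> True"
  by simp
lemma Min_abs_nonneg': "1 \<le> k \<Longrightarrow> 0 \<le> Min ((\<lambda>i. \<bar>(f x::real) - a i\<bar>) ` {1..(k::nat)})"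
  by (subst Min_ge_iff) auto

lemma Fk_nonneg: "0 \<le> Fk k f p a x"
  by (simp add: Fk_def)

lemma Fk_le:
  assumes "i \<in> {1..k}" "0 \<le> p"
  shows "Fk k f p a x \<le> \<bar>f x - a i\<bar> powr p"
  unfolding Fk_def
proof (rule powr_mono2[OF assms(2)])
  show "0 \<le> Min ((\<lambda>i. \<bar>f x - a i\<bar>) ` {1..k})" using assms(1) by (intro Min_abs_nonneg') auto
  show "Min ((\<lambda>i. \<bar>f x - a i\<bar>) ` {1..k}) \<le> \<bar>f x - a i\<bar>" using assms(1) by (intro Min_le) auto
qed

lemma Fk_meas:
  assumes "f \<in> borel_measurable M"
  shows "Fk k f p a \<in> borel_measurable M"
proof -
  have [measurable]: "f \<in> borel_measurable M" by fact
  have "(\<lambda>x. Min ((\<lambda>i. \<bar>f x - a i\<bar>) ` {1..k})) \<in> borel_measurable M"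
    by (rule borel_measurable_Min) auto
  then show ?thesis unfolding Fk_def[abs_def] by measurable
qed

lemma Fk_int:
  assumes "finite_measure M" "in_Lp M p f" "1 \<le> p" "1 \<le> k"
  shows "integrable M (Fk k f p a)"
proof (rule Bochner_Integration.integrable_bound)
  show "integrable M (\<lambda>x. \<bar>f x - a 1\<bar> powr p)"
    using Lp_diff_int[OF assms(2) const_Lp[OF assms(1)] assms(3)] assms(3) by auto
  show "Fk k f p a \<in> borel_measurable M" using assms(2) unfolding in_Lp_def by (intro Fk_meas) auto
  show "AE x in M. norm (Fk k f p a x) \<le> norm (\<bar>f x - a 1\<bar> powr p)"
    using Fk_le[of 1 k p f a] assms(3,4) by (intro AE_I2) (auto simp: Fk_nonneg)
qed

lemma lemmaA:
  assumes "h \<in> Gset M p k" "0 \<le> p"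
  shows "\<exists>a. \<forall>x\<in>space M. Fk k f p a x \<le> \<bar>f x - h x\<bar> powr p"
proof -
  obtain l a A where l: "l \<le> k" "is_partition M l A" "h = (\<lambda>x. \<Sum>i=1..l. a i * indicator (A i) x)"
    using assms unfolding Gset_def by blast
  show ?thesis
  proof (intro exI ballI)
    fix x assume x: "x \<in> space M"
    obtain j where j: "j \<in> {1..l}" "h x = a j" using part_eval_space[OF l(2) x, of a] l(3) by auto
    show "Fk k f p a x \<le> \<bar>f x - h x\<bar> powr p"
      using Fk_le[of j k p f a x] j l assms(2) by auto
  qed
qed

lemma lemmaB:
  assumes "finite_measure M" "f \<in> borel_measurable M" "0 \<le> p" "1 \<le> k"
  shows "\<exists>h\<in>Gset M p k. \<forall>x\<in>space M. \<bar>f x - h x\<bar> powr p = Fk k f p a x"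
proof -
  have [measurable]: "f \<in> borel_measurable M" by fact
  define P where "P i = {x \<in> space M. (\<forall>j\<in>{1..k}. j < i \<longrightarrow> \<bar>f x - a i\<bar> < \<bar>f x - a j\<bar>) \<and>
      (\<forall>j\<in>{1..k}. \<bar>f x - a i\<bar> \<le> \<bar>f x - a j\<bar>)}" for i
  have Pmeas: "P i \<in> sets M" for i unfolding P_def by measurable
  have part: "is_partition M k P"
    unfolding is_partition_def
  proof (intro conjI ballI impI)
    fix i assume "i \<in> {1..k}" show "P i \<in> sets M" by (rule Pmeas)
  next
    fix i j assume ij: "i \<in> {1..k}" "j \<in> {1..k}" "i \<noteq> j"
    have F: False if "x \<in> P i" "x \<in> P j" "i < j" "i \<in> {1..k}" "j \<in> {1..k}" for i j x
    proof -
      from that(2) have "\<bar>f x - a j\<bar> < \<bar>f x - a i\<bar>" unfolding P_def using that(3,4) by blast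
      moreover from that(1) have "\<bar>f x - a i\<bar> \<le> \<bar>f x - a j\<bar>" unfolding P_def using that(5) by blast
      ultimately show False by linarith
    qed
    show "P i \<inter> P j = {}"
    proof (cases "i < j")
      case True then show ?thesis using ij F by blast
    next
      case False then have "j < i" using ij by auto
      then show ?thesis using ij F by blast
    qed
  next
    show "(\<Union>i\<in>{1..k}. P i) = space M"
    proof
      show "(\<Union>i\<in>{1..k}. P i) \<subseteq> space M" unfolding P_def by auto
    next
      show "space M \<subseteq> (\<Union>i\<in>{1..k}. P i)"
      proof
        fix x assume x: "x \<in> space M"
        define m where "m = Min ((\<lambda>i. \<bar>f x - a i\<bar>) ` {1..k})"
        have "m \<in> (\<lambda>i. \<bar>f x - a i\<bar>) ` {1..k}" unfolding m_def using assms(4) by (intro Min_in) auto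
        then obtain i1 where i1: "i1 \<in> {1..k}" "\<bar>f x - a i1\<bar> = m" by auto
        define i0 where "i0 = (LEAST i. i \<in> {1..k} \<and> \<bar>f x - a i\<bar> = m)"
        have i0: "i0 \<in> {1..k} \<and> \<bar>f x - a i0\<bar> = m"
          unfolding i0_def by (rule LeastI[of _ i1]) (use i1 in auto)
        have mle: "m \<le> \<bar>f x - a j\<bar>" if "j \<in> {1..k}" for j
          unfolding m_def using that by (intro Min_le) auto
        have "x \<in> P i0"
          unfolding P_def
        proof (intro CollectI conjI ballI impI x)
          fix j assume j: "j \<in> {1..k}" "j < i0"
          have "\<not> (j \<in> {1..k} \<and> \<bar>f x - a j\<bar> = m)"
            using not_less_Least[of j "\<lambda>i. i \<in> {1..k} \<and> \<bar>f x - a i\<bar> = m"] j(2) unfolding i0_def by auto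
          then show "\<bar>f x - a i0\<bar> < \<bar>f x - a j\<bar>" using mle[OF j(1)] i0 j(1) by auto
        next
          fix j assume "j \<in> {1..k}"
          then show "\<bar>f x - a i0\<bar> \<le> \<bar>f x - a j\<bar>" using mle i0 by auto
        qed
        then show "x \<in> (\<Union>i\<in>{1..k}. P i)" using i0 by auto
      qed
    qed
  qed
  define h where "h = (\<lambda>x. \<Sum>i=1..k. a i * indicator (P i) x)"
  have "h \<in> Gset M p k" unfolding h_def by (rule part_Gset[OF assms(1) part assms(3)]) simp
  moreover have "\<bar>f x - h x\<bar> powr p = Fk k f p a x" if x: "x \<in> space M" for x
  proof -
    obtain j where j: "j \<in> {1..k}" "x \<in> P j" "h x = a j"
      using part_eval_space[OF part x, of a] unfolding h_def by auto
    have "Min ((\<lambda>i. \<bar>f x - a i\<bar>) ` {1..k}) = \<bar>f x - a j\<bar>"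
      using j unfolding P_def by (intro Min_eqI) auto
    then show ?thesis using j unfolding Fk_def by simp
  qed
  ultimately show ?thesis by blast
qed



lemma ereal_subseq:
  fixes s :: "nat \<Rightarrow> real"
  shows "\<exists>r l. strict_mono r \<and> ((\<lambda>n. ereal (s (r n))) \<longlonglongrightarrow> l)"
proof -
  have "seq_compact (UNIV :: ereal set)"
    by (rule compact_imp_seq_compact[OF compact_UNIV])
  then obtain l r where "strict_mono (r :: nat \<Rightarrow> nat)" "((\<lambda>n. ereal (s n)) \<circ> r) \<longlonglongrightarrow> l"
    by (rule seq_compactE) auto
  then show ?thesis by (auto simp: comp_def)
qed

lemma multi_subseq:
  fixes s :: "nat \<Rightarrow> nat \<Rightarrow> real"
  shows "\<exists>r. strict_mono r \<and> (\<forall>i<m. \<exists>l. ((\<lambda>n. ereal (s (r n) i)) \<longlonglongrightarrow> l))"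
proof (induction m)
  case 0
  show ?case by (intro exI[of _ id]) (auto simp: strict_mono_def)
next
  case (Suc m)
  then obtain r where r: "strict_mono r" "\<forall>i<m. \<exists>l. ((\<lambda>n. ereal (s (r n) i)) \<longlonglongrightarrow> l)" by blast
  obtain r' l where r': "strict_mono r'" "((\<lambda>n. ereal (s (r (r' n)) m)) \<longlonglongrightarrow> l)"
    using ereal_subseq[of "\<lambda>n. s (r n) m"] by blast
  have "strict_mono (r \<circ> r')" using r(1) r'(1) by (rule strict_mono_o)
  moreover have "\<exists>l. ((\<lambda>n. ereal (s ((r \<circ> r') n) i)) \<longlonglongrightarrow> l)" if "i < Suc m" for i
  proof (cases "i = m")
    case True then show ?thesis using r'(2) by auto
  next
    case False then have "i < m" using that by auto
    then obtain l' where "((\<lambda>n. ereal (s (r n) i)) \<longlonglongrightarrow> l')" using r(2) by blast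
    from LIMSEQ_subseq_LIMSEQ[OF this r'(1)] show ?thesis by (auto simp: comp_def)
  qed
  ultimately show ?case by blast
qed

lemma div_abs:
  assumes "((\<lambda>n. ereal (s n)) \<longlongrightarrow> l) F" "l = \<infinity> \<or> l = -\<infinity>"
  shows "((\<lambda>n. ereal \<bar>c - s n\<bar>) \<longlongrightarrow> \<infinity>) F"
  unfolding tendsto_PInfty
proof
  fix r :: real
  show "eventually (\<lambda>n. ereal r < ereal \<bar>c - s n\<bar>) F"
    using assms(2)
  proof
    assume "l = \<infinity>"
    with assms(1) have "((\<lambda>n. ereal (s n)) \<longlongrightarrow> \<infinity>) F" by simp
    then have "\<forall>r. eventually (\<lambda>n. ereal r < ereal (s n)) F" by (rule tendsto_PInfty[THEN iffD1])
    then have "eventually (\<lambda>n. ereal (r + \<bar>c\<bar>) < ereal (s n)) F" by blast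
    then show ?thesis by (rule eventually_mono) auto
  next
    assume "l = -\<infinity>"
    with assms(1) have "((\<lambda>n. ereal (s n)) \<longlongrightarrow> -\<infinity>) F" by simp
    then have "\<forall>r. eventually (\<lambda>n. ereal (s n) < ereal r) F" by (rule tendsto_MInfty[THEN iffD1])
    then have "eventually (\<lambda>n. ereal (s n) < ereal (-(r + \<bar>c\<bar>))) F" by blast
    then show ?thesis by (rule eventually_mono) auto
  qed
qed

lemma conv_abs:
  assumes "((\<lambda>n. ereal (s n)) \<longlongrightarrow> ereal a) F"
  shows "((\<lambda>n. ereal \<bar>c - s n\<bar>) \<longlongrightarrow> ereal \<bar>c - a\<bar>) F"
  using assms by (simp add: tendsto_intros)

lemma tendsto_Min_finite:
  fixes L :: "'i \<Rightarrow> 'b::linorder_topology"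
  assumes "finite S" "S \<noteq> {}" "\<And>i. i \<in> S \<Longrightarrow> ((\<lambda>n. g n i) \<longlongrightarrow> L i) F"
  shows "((\<lambda>n. Min ((\<lambda>i. g n i) ` S)) \<longlongrightarrow> Min (L ` S)) F"
  using assms
proof (induction S rule: finite_ne_induct)
  case (singleton x)
  then show ?case by simp
next
  case (insert x S)
  have "((\<lambda>n. min (g n x) (Min ((\<lambda>i. g n i) ` S))) \<longlongrightarrow> min (L x) (Min (L ` S))) F"
    using insert by (intro tendsto_min) auto
  then show ?case using insert by simp
qed



lemma lemmaC:
  assumes fm: "finite_measure M" and f: "in_Lp M p f" and p: "1 \<le> p" and k: "1 \<le> k"
  shows "\<exists>a. \<forall>b. integral\<^sup>L M (Fk k f p a) \<le> integral\<^sup>L M (Fk k f p b)"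
proof -
  have fmeas[measurable]: "f \<in> borel_measurable M" using f unfolding in_Lp_def by auto
  have Fm[measurable]: "Fk k f p a \<in> borel_measurable M" for a by (rule Fk_meas[OF fmeas])
  have Fi: "integrable M (Fk k f p a)" for a by (rule Fk_int[OF fm f p k])
  define \<Phi> where "\<Phi> a = integral\<^sup>L M (Fk k f p a)" for a
  have \<Phi>nn: "0 \<le> \<Phi> a" for a unfolding \<Phi>_def
    by (rule Bochner_Integration.integral_nonneg) (simp add: Fk_nonneg)
  define m where "m = Inf (range \<Phi>)"
  have bdd: "bdd_below (range \<Phi>)" using \<Phi>nn by (intro bdd_belowI[where m=0]) auto
  have mle: "m \<le> \<Phi> b" for b unfolding m_def using bdd by (intro cInf_lower) auto
  have "\<exists>a. \<Phi> a < m + inverse (real (Suc n))" for n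
  proof -
    have "Inf (range \<Phi>) < m + inverse (real (Suc n))" unfolding m_def by simp
    then show ?thesis using cInf_less_iff[OF _ bdd] by auto
  qed
  then obtain A where A: "\<And>n. \<Phi> (A n) < m + inverse (real (Suc n))" by metis
  have A\<Phi>: "(\<lambda>n. \<Phi> (A n)) \<longlonglongrightarrow> m"
  proof (rule tendsto_sandwich[of "\<lambda>n. m" _ _ "\<lambda>n. m + inverse (real (Suc n))"])
    show "eventually (\<lambda>n. m \<le> \<Phi> (A n)) sequentially" using mle by auto
    show "eventually (\<lambda>n. \<Phi> (A n) \<le> m + inverse (real (Suc n))) sequentially"
      by (intro always_eventually allI less_imp_le[OF A])
    show "(\<lambda>n. m) \<longlonglongrightarrow> m" by simp
    show "(\<lambda>n. m + inverse (real (Suc n))) \<longlonglongrightarrow> m"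
      using tendsto_add[OF tendsto_const LIMSEQ_inverse_real_of_nat, of m] by simp
  qed
  obtain r where r: "strict_mono r" "\<forall>i<Suc k. \<exists>l. ((\<lambda>n. ereal (A (r n) i)) \<longlonglongrightarrow> l)"
    using multi_subseq[of "Suc k" A] by blast
  define B where "B n = A (r n)" for n
  have B\<Phi>: "(\<lambda>n. \<Phi> (B n)) \<longlonglongrightarrow> m" unfolding B_def
    using LIMSEQ_subseq_LIMSEQ[OF A\<Phi> r(1)] by (simp add: comp_def)
  from r(2) have "\<forall>i. \<exists>l. i < Suc k \<longrightarrow> ((\<lambda>n. ereal (B n i)) \<longlonglongrightarrow> l)" unfolding B_def by blast
  then obtain L where L0: "\<forall>i. i < Suc k \<longrightarrow> ((\<lambda>n. ereal (B n i)) \<longlonglongrightarrow> L i)" by metis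
  have L: "((\<lambda>n. ereal (B n i)) \<longlonglongrightarrow> L i)" if "i \<in> {1..k}" for i using L0 that by auto
  define J where "J = {i\<in>{1..k}. \<exists>c. L i = ereal c}"
  have Linf: "L i = \<infinity> \<or> L i = -\<infinity>" if "i \<in> {1..k}" "i \<notin> J" for i
    using that unfolding J_def by (cases "L i") auto
  define D where "D x i = (if i \<in> J then ereal \<bar>f x - real_of_ereal (L i)\<bar> else \<infinity>)" for x i
  have Dlim: "((\<lambda>n. ereal \<bar>f x - B n i\<bar>) \<longlonglongrightarrow> D x i)" if i: "i \<in> {1..k}" for x i
  proof (cases "i \<in> J")
    case True
    then obtain c where c: "L i = ereal c" unfolding J_def by auto
    show ?thesis using conv_abs[of "\<lambda>n. B n i" c sequentially "f x"] L[OF i] c True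
      unfolding D_def by simp
  next
    case False
    show ?thesis using div_abs[OF L[OF i] Linf[OF i False], of "f x"] False unfolding D_def by simp
  qed
  have Minlim: "((\<lambda>n. ereal (Min ((\<lambda>i. \<bar>f x - B n i\<bar>) ` {1..k}))) \<longlonglongrightarrow> Min (D x ` {1..k}))" for x
  proof -
    have "ereal (Min ((\<lambda>i. \<bar>f x - B n i\<bar>) ` {1..k})) = Min ((\<lambda>i. ereal \<bar>f x - B n i\<bar>) ` {1..k})" for n
      using mono_Min_commute[of ereal "(\<lambda>i. \<bar>f x - B n i\<bar>) ` {1..k}"] k
      by (simp add: mono_def image_image)
    moreover have "((\<lambda>n. Min ((\<lambda>i. ereal \<bar>f x - B n i\<bar>) ` {1..k})) \<longlonglongrightarrow> Min (D x ` {1..k}))"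
      using k Dlim by (intro tendsto_Min_finite) auto
    ultimately show ?thesis by simp
  qed
  show ?thesis
  proof (cases "J = {}")
    case True
    then have Dinf: "D x i = \<infinity>" for x i by (simp add: D_def)
    have MinDinf: "Min (D x ` {1..k}) = \<infinity>" for x
    proof -
      have "D x ` {1..k} = {\<infinity>}" using k Dinf by auto
      then show ?thesis by simp
    qed
    have muz: "measure M (space M) = 0"
    proof (rule ccontr)
      assume "measure M (space M) \<noteq> 0"
      then have mu: "0 < measure M (space M)" using measure_nonneg[of M "space M"] by linarith
      define T where "T = max 1 ((m+1) / measure M (space M))"
      have T1: "1 \<le> T" unfolding T_def by simp
      have lim: "(\<lambda>n. \<integral>x. min (Fk k f p (B n) x) T \<partial>M) \<longlonglongrightarrow> (\<integral>x. T \<partial>M)"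
      proof (rule integral_dominated_convergence[where w="\<lambda>x. T"])
        show "(\<lambda>x. T) \<in> borel_measurable M" by simp
        show "(\<lambda>x. min (Fk k f p (B n) x) T) \<in> borel_measurable M" for n by measurable
        show "integrable M (\<lambda>x. T)" using fm by (simp add: finite_measure.integrable_const)
        show "AE x in M. (\<lambda>n. min (Fk k f p (B n) x) T) \<longlonglongrightarrow> T"
        proof (intro AE_I2)
          fix x
          have "((\<lambda>n. ereal (Min ((\<lambda>i. \<bar>f x - B n i\<bar>) ` {1..k}))) \<longlonglongrightarrow> \<infinity>)"
            using Minlim[of x] MinDinf[of x] by simp
          then have "LIM n sequentially. Min ((\<lambda>i. \<bar>f x - B n i\<bar>) ` {1..k}) :> at_top"
            by (simp add: tendsto_PInfty_eq_at_top)
          then have "eventually (\<lambda>n. T \<le> Min ((\<lambda>i. \<bar>f x - B n i\<bar>) ` {1..k})) sequentially"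
            by (simp add: filterlim_at_top)
          then have "eventually (\<lambda>n. min (Fk k f p (B n) x) T = T) sequentially"
          proof (rule eventually_mono)
            fix n assume h: "T \<le> Min ((\<lambda>i. \<bar>f x - B n i\<bar>) ` {1..k})"
            let ?m = "Min ((\<lambda>i. \<bar>f x - B n i\<bar>) ` {1..k})"
            have "?m powr 1 \<le> ?m powr p" using h T1 p by (intro powr_mono) auto
            then have "?m \<le> Fk k f p (B n) x" using h T1 unfolding Fk_def by simp
            then show "min (Fk k f p (B n) x) T = T" using h by simp
          qed
          then show "(\<lambda>n. min (Fk k f p (B n) x) T) \<longlonglongrightarrow> T" by (rule tendsto_eventually)
        qed
        show "AE x in M. norm (min (Fk k f p (B n) x) T) \<le> T" for n
          using T1 by (intro AE_I2) (auto simp: Fk_nonneg)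
      qed
      have "(\<integral>x. min (Fk k f p (B n) x) T \<partial>M) \<le> \<Phi> (B n)" for n
        unfolding \<Phi>_def
      proof (rule integral_mono)
        show "integrable M (\<lambda>x. min (Fk k f p (B n) x) T)"
          using T1 by (intro finite_measure.integrable_const_bound[OF fm, where B=T]) (auto simp: Fk_nonneg)
        show "integrable M (Fk k f p (B n))" by (rule Fi)
      qed simp
      then have "(\<integral>x. T \<partial>M) \<le> m"
        by (intro LIMSEQ_le[OF lim B\<Phi>]) auto
      then have "measure M (space M) * T \<le> m" by simp
      moreover have "m + 1 \<le> measure M (space M) * T"
      proof -
        have "m + 1 = measure M (space M) * ((m+1) / measure M (space M))" using mu by simp
        also have "\<dots> \<le> measure M (space M) * T" unfolding T_def using mu by (intro mult_left_mono) auto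
        finally show ?thesis .
      qed
      ultimately show False by linarith
    qed
    have "space M \<in> null_sets M"
      using muz finite_measure.emeasure_eq_measure[OF fm] by auto
    then have "\<Phi> b = 0" for b
      unfolding \<Phi>_def by (intro integral_eq_zero_AE AE_I'[where N="space M"]) auto
    then show ?thesis unfolding \<Phi>_def by auto
  next
    case False
    then obtain j0 where j0: "j0 \<in> J" by blast
    have j0k: "j0 \<in> {1..k}" using j0 unfolding J_def by auto
    define \<alpha> where "\<alpha> i = real_of_ereal (L i)" for i
    define a where "a i = (if i \<in> J then \<alpha> i else \<alpha> j0)" for i
    have MinD: "Min (D x ` {1..k}) = ereal (Min ((\<lambda>i. \<bar>f x - a i\<bar>) ` {1..k}))" for x
    proof -
      have le: "Min (D x ` {1..k}) \<le> ereal \<bar>f x - a i\<bar>" if i: "i \<in> {1..k}" for i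
      proof (cases "i \<in> J")
        case True
        then have "D x i = ereal \<bar>f x - a i\<bar>" unfolding D_def a_def \<alpha>_def by simp
        then show ?thesis using i by (metis Min_le finite_atLeastAtMost finite_imageI image_eqI)
      next
        case False
        then have "D x j0 = ereal \<bar>f x - a i\<bar>" using j0 unfolding D_def a_def \<alpha>_def by simp
        then show ?thesis using j0k by (metis Min_le finite_atLeastAtMost finite_imageI image_eqI)
      qed
      have "Min (D x ` {1..k}) \<in> D x ` {1..k}" using k by (intro Min_in) auto
      then obtain i0 where i0: "i0 \<in> {1..k}" "Min (D x ` {1..k}) = D x i0" by auto
      have "D x j0 \<noteq> \<infinity>" using j0 unfolding D_def by simp
      moreover have "Min (D x ` {1..k}) \<le> D x j0" using j0k by (intro Min_le) auto
      ultimately have "i0 \<in> J" using i0 unfolding D_def by (auto split: if_splits)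
      then have e1: "Min (D x ` {1..k}) = ereal \<bar>f x - a i0\<bar>"
        using i0 unfolding D_def a_def \<alpha>_def by simp
      have "Min ((\<lambda>i. \<bar>f x - a i\<bar>) ` {1..k}) \<le> \<bar>f x - a i0\<bar>" using i0 by (intro Min_le) auto
      moreover have "Min ((\<lambda>i. \<bar>f x - a i\<bar>) ` {1..k}) \<in> (\<lambda>i. \<bar>f x - a i\<bar>) ` {1..k}"
        using k by (intro Min_in) auto
      then obtain i1 where i1: "i1 \<in> {1..k}" "Min ((\<lambda>i. \<bar>f x - a i\<bar>) ` {1..k}) = \<bar>f x - a i1\<bar>"
        by auto
      ultimately show ?thesis using e1 le[OF i1(1)] by (metis antisym ereal_less_eq(3))
    qed
    have Flim: "(\<lambda>n. Fk k f p (B n) x) \<longlonglongrightarrow> Fk k f p a x" for x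
    proof -
      have "(\<lambda>n. Min ((\<lambda>i. \<bar>f x - B n i\<bar>) ` {1..k})) \<longlonglongrightarrow> Min ((\<lambda>i. \<bar>f x - a i\<bar>) ` {1..k})"
        using Minlim[of x] MinD[of x] by simp
      moreover have "0 \<le> Min ((\<lambda>i. \<bar>f x - B n i\<bar>) ` {1..k})" for n using k by (rule Min_abs_nonneg')
      ultimately show ?thesis unfolding Fk_def using p
        by (intro tendsto_powr') auto
    qed
    obtain c0 where c0: "L j0 = ereal c0" using j0 unfolding J_def by auto
    have "(\<lambda>n. B n j0) \<longlonglongrightarrow> c0" using L[OF j0k] c0 by simp
    then have "Bseq (\<lambda>n. B n j0)" by (intro convergent_imp_Bseq convergentI)
    then obtain K where K: "0 < K" "\<And>n. \<bar>B n j0\<bar> \<le> K" by (auto elim: BseqE)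
    have "(\<lambda>n. \<Phi> (B n)) \<longlonglongrightarrow> \<Phi> a" unfolding \<Phi>_def
    proof (rule integral_dominated_convergence[where w="\<lambda>x. 2 powr p * (\<bar>f x\<bar> powr p + K powr p)"])
      show "integrable M (\<lambda>x. 2 powr p * (\<bar>f x\<bar> powr p + K powr p))"
        using f fm unfolding in_Lp_def by (auto simp: finite_measure.integrable_const)
      show "AE x in M. (\<lambda>n. Fk k f p (B n) x) \<longlonglongrightarrow> Fk k f p a x" using Flim by auto
      show "AE x in M. norm (Fk k f p (B n) x) \<le> 2 powr p * (\<bar>f x\<bar> powr p + K powr p)" for n
      proof (intro AE_I2)
        fix x
        have "Fk k f p (B n) x \<le> \<bar>f x - B n j0\<bar> powr p" using j0k p by (intro Fk_le) auto
        also have "\<dots> \<le> (\<bar>f x\<bar> + K) powr p" using K(2)[of n] p by (intro powr_mono2) auto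
        also have "\<dots> \<le> 2 powr p * (\<bar>f x\<bar> powr p + K powr p)" using K p by (intro powr_sum_bound) auto
        finally show "norm (Fk k f p (B n) x) \<le> 2 powr p * (\<bar>f x\<bar> powr p + K powr p)"
          by (simp add: Fk_nonneg)
      qed
    qed auto
    then have "\<Phi> a = m" using B\<Phi> LIMSEQ_unique by blast
    then show ?thesis using mle unfolding \<Phi>_def by metis
  qed
qed



lemma proximinal_thm:
  assumes fm: "finite_measure M" and p: "1 \<le> p" and k: "1 \<le> k"
  shows "proximinal M p k"
  unfolding proximinal_def
proof (intro allI impI)
  fix f assume f: "in_Lp M p f"
  have fmeas: "f \<in> borel_measurable M" using f unfolding in_Lp_def by auto
  obtain a where a: "\<And>b. integral\<^sup>L M (Fk k f p a) \<le> integral\<^sup>L M (Fk k f p b)"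
    using lemmaC[OF fm f p k] by blast
  obtain h where h: "h \<in> Gset M p k" "\<And>x. x \<in> space M \<Longrightarrow> \<bar>f x - h x\<bar> powr p = Fk k f p a x"
    using lemmaB[OF fm fmeas _ k, of p a] p by auto
  show "\<exists>g. is_minimizer M p k f g"
  proof (rule exI, rule minimizerI[OF h(1)])
    fix h' assume h': "h' \<in> Gset M p k"
    obtain a' where a': "\<And>x. x \<in> space M \<Longrightarrow> Fk k f p a' x \<le> \<bar>f x - h' x\<bar> powr p"
      using lemmaA[OF h', of f] p by auto
    have h'L: "in_Lp M p h'" using h' unfolding Gset_def by auto
    have "integral\<^sup>L M (\<lambda>x. \<bar>f x - h x\<bar> powr p) = integral\<^sup>L M (Fk k f p a)"
      using h(2) by (intro Bochner_Integration.integral_cong) auto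
    also have "\<dots> \<le> integral\<^sup>L M (Fk k f p a')" by (rule a)
    also have "\<dots> \<le> integral\<^sup>L M (\<lambda>x. \<bar>f x - h' x\<bar> powr p)"
      using a' by (intro integral_mono Fk_int[OF fm f p k] Lp_diff_int[OF f h'L p]) auto
    finally show "lpnorm M p (\<lambda>x. f x - h x) \<le> lpnorm M p (\<lambda>x. f x - h' x)"
      using p by (subst lpnorm_le_iff) (auto intro: int_powr_nonneg)
  qed
qed

lemma strict_mid_nonneg:
  fixes s t p :: real
  assumes "0 \<le> s" "s < t" "1 < p"
  shows "((s+t)/2) powr p < (s powr p + t powr p)/2"
proof (cases "s = 0")
  case True
  have t: "0 < t" using assms True by auto
  have "2 powr 1 < 2 powr p" using assms by (intro powr_less_mono) auto
  then have two: "2 < 2 powr p" by simp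
  have "(t/2) powr p = t powr p / 2 powr p" using t by (simp add: powr_divide)
  also have "\<dots> < t powr p / 2" using two t by (intro divide_strict_left_mono) auto
  finally show ?thesis using True by simp
next
  case False
  then have s: "0 < s" using assms by auto
  define g where "g y = (s powr p + y powr p)/2 - ((s+y)/2) powr p" for y
  have "g s < g t"
  proof (rule DERIV_pos_imp_increasing_open[OF assms(2)])
    fix y assume y: "s < y" "y < t"
    have y0: "0 < y" using s y by auto
    have d: "DERIV g y :> (p * y powr (p - 1)) / 2 - p * ((s+y)/2) powr (p - 1) * (1/2)"
      unfolding g_def using y0 s
      by (auto intro!: derivative_eq_intros has_real_derivative_powr)
    have "((s+y)/2) powr (p - 1) < y powr (p - 1)"
      using s y assms by (intro powr_less_mono2) auto
    then have "0 < (p * y powr (p - 1)) / 2 - p * ((s+y)/2) powr (p - 1) * (1/2)"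
      using assms by (simp add: field_simps)
    then show "\<exists>d. DERIV g y :> d \<and> 0 < d" using d by blast
  next
    have "continuous_on {s..t} (\<lambda>y. y powr p)" using s by (intro continuous_intros) auto
    moreover have "continuous_on {s..t} (\<lambda>y. ((s+y)/2) powr p)" using s by (intro continuous_intros) auto
    ultimately show "continuous_on {s..t} g" unfolding g_def using s by (intro continuous_intros) auto
  qed
  moreover have "g s = 0" unfolding g_def by simp
  ultimately show ?thesis unfolding g_def by simp
qed

lemma strict_mid_abs:
  fixes u v p :: real
  assumes "u \<noteq> v" "1 < p"
  shows "\<bar>(u+v)/2\<bar> powr p < (\<bar>u\<bar> powr p + \<bar>v\<bar> powr p)/2"
proof (cases "\<bar>u\<bar> = \<bar>v\<bar>")
  case True
  then have "v = -u" "u \<noteq> 0" using assms by (auto simp: abs_eq_iff)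
  then show ?thesis using assms by simp
next
  case False
  define s where "s = min \<bar>u\<bar> \<bar>v\<bar>"
  define t where "t = max \<bar>u\<bar> \<bar>v\<bar>"
  have st: "0 \<le> s" "s < t" using False unfolding s_def t_def by auto
  have "\<bar>(u+v)/2\<bar> powr p \<le> ((s+t)/2) powr p"
    using assms unfolding s_def t_def by (intro powr_mono2) (auto simp: min_def max_def)
  also have "\<dots> < (s powr p + t powr p)/2" by (rule strict_mid_nonneg[OF st assms(2)])
  also have "\<dots> = (\<bar>u\<bar> powr p + \<bar>v\<bar> powr p)/2" unfolding s_def t_def by (auto simp: min_def max_def)
  finally show ?thesis .
qed



lemma set_lint_eq: "(LINT x:A|M. g x) = (\<integral>x. indicator A x * (g x::real) \<partial>M)"
  by (simp add: set_lebesgue_integral_def)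

lemma ind_int: "C \<in> sets M \<Longrightarrow> integrable M g \<Longrightarrow> integrable M (\<lambda>x. indicator C x * (g x::real))"
  using integrable_mult_indicator[of C M g] by simp

lemma null_set_of:
  assumes "finite_measure M" "C \<in> sets M" "measure M C = 0"
  shows "C \<in> null_sets M"
  using assms finite_measure.emeasure_eq_measure[OF assms(1), of C] by auto

lemma lint_null:
  assumes "finite_measure M" "C \<in> sets M" "measure M C = 0"
  shows "(LINT x:C|M. g x) = (0::real)"
  unfolding set_lint_eq
  by (intro integral_eq_zero_AE AE_I'[OF null_set_of[OF assms]]) (auto simp: indicator_def)

lemma abs_powr_one: "\<bar>y::real\<bar> powr 1 = \<bar>y\<bar>"
  by simp

lemma Mp_mean:
  assumes fm: "finite_measure M" and f: "in_Lp M p f" and p: "1 \<le> p" and C: "C \<in> sets M"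
    and pos: "0 < measure M C" and b0: "is_pth_mean M p f C b0"
  shows "is_pth_mean M p f C (Mp M p f C)"
proof -
  define \<phi> where "\<phi> c = (\<integral>x. indicator C x * \<bar>f x - c\<bar> powr p \<partial>M)" for c
  have int: "integrable M (\<lambda>x. indicator C x * \<bar>f x - c\<bar> powr p)" for c
    by (intro ind_int[OF C] Lp_diff_int[OF f const_Lp[OF fm] p]) (use p in auto)
  define S where "S = {a. is_pth_mean M p f C a}"
  have S_iff: "a \<in> S \<longleftrightarrow> (\<forall>c. \<phi> a \<le> \<phi> c)" for a
    unfolding S_def is_pth_mean_def \<phi>_def set_lint_eq by simp
  have b0S: "b0 \<in> S" using b0 unfolding S_def by simp
  have Csp: "C \<subseteq> space M" using C by (rule sets.sets_into_space)
  show ?thesis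
  proof (cases "p = 1")
    case True
    have MpE: "Mp M p f C = (Inf S + Sup S) / 2" unfolding Mp_def S_def using pos True by simp
    have \<phi>1: "\<phi> c = (\<integral>x. indicator C x * \<bar>f x - c\<bar> \<partial>M)" for c unfolding \<phi>_def True by simp
    have int1: "integrable M (\<lambda>x. indicator C x * \<bar>f x - c\<bar>)" for c using int[of c] True by simp
    have conv: "t * s1 + (1 - t) * s2 \<in> S" if s: "s1 \<in> S" "s2 \<in> S" and t: "0 \<le> t" "t \<le> 1" for s1 s2 t
    proof -
      have "\<phi> (t * s1 + (1 - t) * s2) \<le> t * \<phi> s1 + (1 - t) * \<phi> s2"
      proof -
        have pw: "indicator C x * \<bar>f x - (t * s1 + (1 - t) * s2)\<bar> \<le>
            t * (indicator C x * \<bar>f x - s1\<bar>) + (1 - t) * (indicator C x * \<bar>f x - s2\<bar>)" for x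
        proof -
          have e: "f x - (t * s1 + (1 - t) * s2) = t * (f x - s1) + (1 - t) * (f x - s2)" by algebra
          have "\<bar>f x - (t * s1 + (1 - t) * s2)\<bar> \<le> \<bar>t * (f x - s1)\<bar> + \<bar>(1 - t) * (f x - s2)\<bar>"
            unfolding e by (rule abs_triangle_ineq)
          also have "\<dots> = t * \<bar>f x - s1\<bar> + (1 - t) * \<bar>f x - s2\<bar>" using t by (simp add: abs_mult)
          finally show ?thesis by (auto simp: indicator_def algebra_simps)
        qed
        have "\<phi> (t * s1 + (1 - t) * s2) \<le> (\<integral>x. t * (indicator C x * \<bar>f x - s1\<bar>) + (1 - t) * (indicator C x * \<bar>f x - s2\<bar>) \<partial>M)"
          unfolding \<phi>1 using pw int1 by (intro integral_mono) auto
        also have "\<dots> = t * \<phi> s1 + (1 - t) * \<phi> s2" unfolding \<phi>1 using int1 by simp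
        finally show ?thesis .
      qed
      moreover have "t * \<phi> s1 + (1 - t) * \<phi> s2 \<le> t * \<phi> c + (1 - t) * \<phi> c" for c
        using s t S_iff by (intro add_mono mult_left_mono) auto
      ultimately show ?thesis unfolding S_iff by (metis order_trans distrib_right add_diff_cancel_left' mult_1 diff_add_cancel)
    qed
    have fint: "integrable M (\<lambda>x. \<bar>f x\<bar>)" using f True unfolding in_Lp_def by simp
    have indI: "integrable M (\<lambda>x. indicator C x * c)" for c :: real
    proof -
      have "integrable M (\<lambda>x. indicator C x :: real)" using C fm
        by (intro integrable_real_indicator) (auto simp: finite_measure.emeasure_eq_measure)
      then show ?thesis by simp
    qed
    define R where "R = (\<phi> b0 + (\<integral>x. indicator C x * \<bar>f x\<bar> \<partial>M)) / measure M C"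
    have bnd: "\<bar>a\<bar> \<le> R" if a: "a \<in> S" for a
    proof -
      have "\<bar>a\<bar> * measure M C - (\<integral>x. indicator C x * \<bar>f x\<bar> \<partial>M) = (\<integral>x. indicator C x * \<bar>a\<bar> - indicator C x * \<bar>f x\<bar> \<partial>M)"
        using ind_int[OF C fint] C Csp fm
        by (simp add: finite_measure.emeasure_eq_measure Int_absorb2)
      also have "\<dots> \<le> \<phi> a"
        unfolding \<phi>1 using ind_int[OF C fint] int1 C fm indI
        by (intro integral_mono Bochner_Integration.integrable_diff) (auto simp: indicator_def finite_measure.emeasure_eq_measure)
      also have "\<dots> \<le> \<phi> b0" using a S_iff by auto
      finally have "\<bar>a\<bar> * measure M C \<le> \<phi> b0 + (\<integral>x. indicator C x * \<bar>f x\<bar> \<partial>M)" by simp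
      then show ?thesis unfolding R_def using pos by (simp add: field_simps)
    qed
    have ne: "S \<noteq> {}" using b0S by auto
    have bA: "bdd_above S" using bnd by (intro bdd_aboveI[where M=R]) (auto simp: abs_le_iff)
    have bB: "bdd_below S" using bnd by (intro bdd_belowI[where m="-R"]) (force simp: abs_le_iff)
    have lo: "Inf S \<le> b0" using bB b0S by (rule cInf_lower[rotated])
    have hi: "b0 \<le> Sup S" using bA b0S by (rule cSup_upper[rotated])
    show ?thesis
    proof (cases "Inf S = Sup S")
      case True
      then have "Mp M p f C = b0" using lo hi MpE by simp
      then show ?thesis using b0 by simp
    next
      case False
      then have lt: "Inf S < Sup S" using lo hi by simp
      define mid where "mid = (Inf S + Sup S) / 2"
      have "Inf S < mid" using lt unfolding mid_def by simp
      then obtain s1 where s1: "s1 \<in> S" "s1 < mid" using cInf_less_iff[OF ne bB] by auto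
      have "mid < Sup S" using lt unfolding mid_def by simp
      then obtain s2 where s2: "s2 \<in> S" "mid < s2" using less_cSup_iff[OF ne bA] by auto
      define t where "t = (s2 - mid) / (s2 - s1)"
      have t: "0 \<le> t" "t \<le> 1" using s1 s2 unfolding t_def by (auto simp: field_simps)
      have d: "s2 - s1 \<noteq> 0" using s1 s2 by simp
      have tt: "t * (s2 - s1) = s2 - mid" unfolding t_def using d by simp
      have "t * s1 + (1 - t) * s2 = s2 - t * (s2 - s1)" by (simp add: algebra_simps)
      then have "t * s1 + (1 - t) * s2 = mid" using tt by simp
      then have "mid \<in> S" using conv[OF s1(1) s2(1) t] by simp
      then have "is_pth_mean M p f C mid" unfolding S_def by simp
      moreover have "Mp M p f C = mid" using MpE unfolding mid_def by simp
      ultimately show ?thesis by simp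
    qed
  next
    case False
    then have p1: "1 < p" using p by simp
    have MpE: "Mp M p f C = (THE a. is_pth_mean M p f C a)" unfolding Mp_def using pos False by simp
    have uniq: "a1 = a2" if a: "a1 \<in> S" "a2 \<in> S" for a1 a2
    proof (rule ccontr)
      assume ne: "a1 \<noteq> a2"
      define c where "c = (a1 + a2) / 2"
      define \<psi> where "\<psi> x = indicator C x * ((\<bar>f x - a1\<bar> powr p + \<bar>f x - a2\<bar> powr p) / 2 - \<bar>f x - c\<bar> powr p)" for x
      have \<psi>pos: "0 < (\<bar>f x - a1\<bar> powr p + \<bar>f x - a2\<bar> powr p) / 2 - \<bar>f x - c\<bar> powr p" for x
      proof -
        have e: "(f x - a1 + (f x - a2)) / 2 = f x - c" unfolding c_def by (simp add: field_simps)
        have "\<bar>(f x - a1 + (f x - a2)) / 2\<bar> powr p < (\<bar>f x - a1\<bar> powr p + \<bar>f x - a2\<bar> powr p) / 2"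
          using ne p1 by (intro strict_mid_abs) auto
        then show ?thesis unfolding e by simp
      qed
      have \<psi>eq: "\<psi> x = (indicator C x * \<bar>f x - a1\<bar> powr p) / 2 + (indicator C x * \<bar>f x - a2\<bar> powr p) / 2
          - indicator C x * \<bar>f x - c\<bar> powr p" for x
        unfolding \<psi>_def by (simp add: algebra_simps add_divide_distrib)
      have \<psi>int: "integrable M \<psi>" unfolding \<psi>eq[abs_def] using int by auto
      have "integral\<^sup>L M \<psi> = \<phi> a1 / 2 + \<phi> a2 / 2 - \<phi> c"
        unfolding \<psi>eq[abs_def] \<phi>_def using int by simp
      also have "\<dots> \<le> 0"
      proof -
        have "\<phi> a1 \<le> \<phi> c" "\<phi> a2 \<le> \<phi> c" using a unfolding S_iff by auto
        then show ?thesis by simp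
      qed
      finally have le0: "integral\<^sup>L M \<psi> \<le> 0" .
      have nn: "AE x in M. 0 \<le> \<psi> x" using \<psi>pos by (intro AE_I2) (auto simp: \<psi>_def indicator_def less_imp_le)
      have "0 \<le> integral\<^sup>L M \<psi>" using nn by (rule integral_nonneg_AE)
      then have "integral\<^sup>L M \<psi> = 0" using le0 by simp
      then have "AE x in M. \<psi> x = 0" using integral_nonneg_eq_0_iff_AE[OF \<psi>int nn] by simp
      then have "AE x in M. x \<notin> C"
      proof (rule AE_mp)
        have "\<psi> x = 0 \<longrightarrow> x \<notin> C" for x using \<psi>pos[of x] unfolding \<psi>_def by (auto simp: indicator_def)
        then show "AE x in M. \<psi> x = 0 \<longrightarrow> x \<notin> C" by simp
      qed
      moreover have "(AE x in M. x \<notin> C) \<longleftrightarrow> emeasure M C = 0"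
        by (rule AE_iff_measurable[OF C]) (use Csp in auto)
      ultimately have "emeasure M C = 0" by simp
      then have "measure M C = 0" by (simp add: measure_def)
      then show False using pos by simp
    qed
    have "is_pth_mean M p f C (THE a. is_pth_mean M p f C a)"
    proof (rule theI[of "is_pth_mean M p f C" b0])
      show "is_pth_mean M p f C b0" by (rule b0)
      fix x assume "is_pth_mean M p f C x"
      then have "x \<in> S" unfolding S_def by simp
      then show "x = b0" using uniq b0S by blast
    qed
    then show ?thesis using MpE by simp
  qed
qed



lemma b_mono:
  fixes i j q :: nat
  assumes "\<forall>i\<in>{1..q}. \<forall>j\<in>{1..q}. i < j \<longrightarrow> b i < (b j::real)" "i \<in> {1..q}" "j \<in> {1..q}" "i \<le> j"
  shows "b i \<le> b j"
proof (cases "i = j")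
  case True then show ?thesis by simp
next
  case False then have "i < j" using assms(4) by simp
  then have "b i < b j" using assms(1-3) by blast
  then show ?thesis by simp
qed

lemma thr_mono:
  assumes binc: "\<forall>i\<in>{1..q}. \<forall>j\<in>{1..q}. i < j \<longrightarrow> b i < b j" and "1 \<le> i" "i \<le> j" "j \<le> q + 1"
  shows "thr b q i \<le> thr b q j"
proof (cases "i = 1")
  case True then show ?thesis by (simp add: thr_def)
next
  case False
  then have i2: "2 \<le> i" using assms by auto
  show ?thesis
  proof (cases "j = q + 1")
    case True then show ?thesis using i2 assms by (simp add: thr_def)
  next
    case False
    then have "j \<le> q" using assms by auto
    then have "b (i - 1) \<le> b (j - 1)" "b i \<le> b j" using i2 assms by (auto intro!: b_mono[OF binc])
    then show ?thesis using i2 False \<open>j \<le> q\<close> assms by (simp add: thr_def)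
  qed
qed

lemma Cset_sets:
  assumes "f \<in> borel_measurable M"
  shows "Cset M f b q i \<in> sets M"
proof -
  have [measurable]: "f \<in> borel_measurable M" by fact
  show ?thesis unfolding Cset_def by measurable
qed

lemma Cset_part:
  assumes fmeas: "f \<in> borel_measurable M"
    and binc: "\<forall>i\<in>{1..q}. \<forall>j\<in>{1..q}. i < j \<longrightarrow> b i < b j"
    and q0: "q = 0 \<Longrightarrow> space M = {}"
  shows "is_partition M q (Cset M f b q)"
  unfolding is_partition_def
proof (intro conjI ballI impI)
  fix i show "Cset M f b q i \<in> sets M" by (rule Cset_sets[OF fmeas])
next
  fix i j assume ij: "i \<in> {1..q}" "j \<in> {1..q}" "i \<noteq> j"
  have F: False if "x \<in> Cset M f b q i" "x \<in> Cset M f b q j" "i < j" "i \<in> {1..q}" "j \<in> {1..q}" for i j x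
  proof -
    have "thr b q (i + 1) \<le> thr b q j" using that by (intro thr_mono[OF binc]) auto
    then show False using that unfolding Cset_def by auto
  qed
  show "Cset M f b q i \<inter> Cset M f b q j = {}"
  proof (cases "i < j")
    case True then show ?thesis using ij F by blast
  next
    case False then have "j < i" using ij by auto
    then show ?thesis using ij F by blast
  qed
next
  show "(\<Union>i\<in>{1..q}. Cset M f b q i) = space M"
  proof
    show "(\<Union>i\<in>{1..q}. Cset M f b q i) \<subseteq> space M" unfolding Cset_def by auto
  next
    show "space M \<subseteq> (\<Union>i\<in>{1..q}. Cset M f b q i)"
    proof
      fix x assume x: "x \<in> space M"
      then have q1: "1 \<le> q" using q0 by (cases q) auto
      define I where "I = {i\<in>{1..q}. thr b q i \<le> ereal (f x)}"
      have "1 \<in> I" unfolding I_def using q1 by (simp add: thr_def)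
      have finI: "finite I" unfolding I_def by simp
      define i0 where "i0 = Max I"
      have i0I: "i0 \<in> I" unfolding i0_def using finI \<open>1 \<in> I\<close> by (intro Max_in) auto
      have "ereal (f x) < thr b q (i0 + 1)"
      proof (cases "i0 = q")
        case True then show ?thesis using q1 by (simp add: thr_def)
      next
        case False
        then have "i0 + 1 \<in> {1..q}" using i0I unfolding I_def by auto
        moreover have "i0 + 1 \<notin> I"
        proof
          assume "i0 + 1 \<in> I"
          then have "i0 + 1 \<le> i0" unfolding i0_def using finI by (intro Max_ge)
          then show False by simp
        qed
        ultimately show ?thesis unfolding I_def by auto
      qed
      then have "x \<in> Cset M f b q i0" using i0I x unfolding I_def Cset_def by auto
      then show "x \<in> (\<Union>i\<in>{1..q}. Cset M f b q i)" using i0I unfolding I_def by auto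
    qed
  qed
qed

lemma Cset_nearest:
  assumes binc: "\<forall>i\<in>{1..q}. \<forall>j\<in>{1..q}. i < j \<longrightarrow> b i < b j"
    and x: "x \<in> Cset M f b q i" and i: "i \<in> {1..q}" and j: "j \<in> {1..q}"
  shows "\<bar>f x - b i\<bar> \<le> \<bar>f x - b j\<bar>"
proof -
  consider "j = i" | "i < j" | "j < i" by linarith
  then show ?thesis
  proof cases
    case 1 then show ?thesis by simp
  next
    case 2
    then have "thr b q (i + 1) = ereal ((b i + b (i + 1)) / 2)" using i j by (simp add: thr_def)
    then have "f x < (b i + b (i + 1)) / 2" using x unfolding Cset_def by auto
    moreover have "b (i + 1) \<le> b j" using 2 i j by (intro b_mono[OF binc]) auto
    moreover have "b i < b j" using 2 i j binc by auto
    ultimately show ?thesis by (auto simp: abs_if)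
  next
    case 3
    then have "thr b q i = ereal ((b (i - 1) + b i) / 2)" using i j by (simp add: thr_def)
    then have "(b (i - 1) + b i) / 2 \<le> f x" using x unfolding Cset_def by auto
    moreover have "b j \<le> b (i - 1)" using 3 i j by (intro b_mono[OF binc]) auto
    moreover have "b j < b i" using 3 i j binc by auto
    ultimately show ?thesis by (auto simp: abs_if)
  qed
qed

lemma part_split:
  assumes fm: "finite_measure M" and C: "is_partition M q C" and f: "in_Lp M p f" and p: "1 \<le> p"
  shows "(\<integral>x. \<bar>f x - (\<Sum>i=1..q. c i * indicator (C i) x)\<bar> powr p \<partial>M) = (\<Sum>i=1..q. LINT x:C i|M. \<bar>f x - c i\<bar> powr p)"
proof -
  have "(\<integral>x. \<bar>f x - (\<Sum>i=1..q. c i * indicator (C i) x)\<bar> powr p \<partial>M) =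
      (\<integral>x. (\<Sum>i=1..q. indicator (C i) x * \<bar>f x - c i\<bar> powr p) \<partial>M)"
  proof (rule Bochner_Integration.integral_cong)
    fix x assume x: "x \<in> space M"
    obtain j where j: "j \<in> {1..q}" "x \<in> C j" using part_ex[OF C x] by blast
    have "(\<Sum>i=1..q. indicator (C i) x * \<bar>f x - c i\<bar> powr p) = (\<Sum>i=1..q. \<bar>f x - c i\<bar> powr p * indicator (C i) x)"
      by (simp add: mult.commute)
    also have "\<dots> = \<bar>f x - c j\<bar> powr p" by (rule part_eval[OF C j])
    finally show "\<bar>f x - (\<Sum>i=1..q. c i * indicator (C i) x)\<bar> powr p = (\<Sum>i=1..q. indicator (C i) x * \<bar>f x - c i\<bar> powr p)"
      using part_eval[OF C j, of c] by simp
  qed simp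
  also have "\<dots> = (\<Sum>i=1..q. \<integral>x. indicator (C i) x * \<bar>f x - c i\<bar> powr p \<partial>M)"
    using part_sets[OF C] p
    by (intro Bochner_Integration.integral_sum ind_int Lp_diff_int[OF f const_Lp[OF fm]]) auto
  finally show ?thesis by (simp add: set_lint_eq)
qed



lemma part2:
  assumes fm: "finite_measure M" and p: "1 \<le> p" and k: "1 \<le> k"
    and f: "in_Lp M p f" and qk: "q \<le> k" and binc: "\<forall>i\<in>{1..q}. \<forall>j\<in>{1..q}. i < j \<longrightarrow> b i < b j"
    and A: "is_partition M q A" and Apos: "\<forall>i\<in>{1..q}. measure M (A i) > 0"
    and g: "is_minimizer M p k f (\<lambda>x. \<Sum>i=1..q. b i * indicator (A i) x)"
  shows "is_minimizer M p k f (\<lambda>x. \<Sum>i=1..q. b i * indicator (Cset M f b q i) x) \<and>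
       (\<forall>i\<in>{1..q}. measure M (Cset M f b q i) > 0 \<longrightarrow> is_pth_mean M p f (Cset M f b q i) (b i)) \<and>
       is_minimizer M p q f (\<lambda>x. \<Sum>i=1..q. Mp M p f (Cset M f b q i) * indicator (Cset M f b q i) x) \<and>
       ((\<forall>h. is_minimizer M p k f h \<longrightarrow> q \<le> card (h ` space M)) \<longrightarrow>
          (\<forall>i\<in>{1..q}. measure M (Cset M f b q i) > 0))"
proof -
  have fmeas: "f \<in> borel_measurable M" using f unfolding in_Lp_def by auto
  define C where "C = Cset M f b q"
  have q0: "q = 0 \<Longrightarrow> space M = {}" using A unfolding is_partition_def by auto
  have Cp: "is_partition M q C" unfolding C_def by (rule Cset_part[OF fmeas binc q0])
  have Csets: "C i \<in> sets M" for i unfolding C_def by (rule Cset_sets[OF fmeas])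
  define G where "G c = (\<lambda>x. \<Sum>i=1..q. c i * indicator (C i) x :: real)" for c :: "nat \<Rightarrow> real"
  have GL: "in_Lp M p (G c)" for c unfolding G_def using p by (intro part_Lp[OF fm Cp]) auto
  have Gk: "G c \<in> Gset M p k" for c unfolding G_def using p qk by (intro part_Gset[OF fm Cp]) auto
  have Gq: "G c \<in> Gset M p q" for c unfolding G_def using p by (intro part_Gset[OF fm Cp]) auto
  define g0 where "g0 = (\<lambda>x. \<Sum>i=1..q. b i * indicator (A i) x)"
  have gL: "in_Lp M p g0" unfolding g0_def using p by (intro part_Lp[OF fm A]) auto
  define I where "I c = (\<integral>x. \<bar>f x - G c x\<bar> powr p \<partial>M)" for c
  have Isplit: "I c = (\<Sum>i=1..q. LINT x:C i|M. \<bar>f x - c i\<bar> powr p)" for c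
    unfolding I_def G_def by (rule part_split[OF fm Cp f p])
  have lp_le: "lpnorm M p (\<lambda>x. f x - G c x) \<le> lpnorm M p (\<lambda>x. f x - h x) \<longleftrightarrow>
      I c \<le> (\<integral>x. \<bar>f x - h x\<bar> powr p \<partial>M)" for c h
    unfolding I_def using p by (intro lpnorm_le_iff int_powr_nonneg) auto
  have m1: "is_minimizer M p k f (G b)"
  proof (rule minimizerI[OF Gk])
    fix h assume h: "h \<in> Gset M p k"
    have "I b \<le> (\<integral>x. \<bar>f x - g0 x\<bar> powr p \<partial>M)"
      unfolding I_def
    proof (rule integral_mono[OF Lp_diff_int[OF f GL p] Lp_diff_int[OF f gL p]])
      fix x assume x: "x \<in> space M"
      obtain i where i: "i \<in> {1..q}" "x \<in> C i" "G b x = b i"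
        using part_eval_space[OF Cp x, of b] unfolding G_def by auto
      obtain j where j: "j \<in> {1..q}" "x \<in> A j" "g0 x = b j"
        using part_eval_space[OF A x, of b] unfolding g0_def by auto
      have "\<bar>f x - b i\<bar> \<le> \<bar>f x - b j\<bar>"
        using Cset_nearest[OF binc _ i(1) j(1), of x M f] i(2) unfolding C_def by blast
      then show "\<bar>f x - G b x\<bar> powr p \<le> \<bar>f x - g0 x\<bar> powr p"
        using i j p by (intro powr_mono2) auto
    qed
    then have "lpnorm M p (\<lambda>x. f x - G b x) \<le> lpnorm M p (\<lambda>x. f x - g0 x)" using lp_le by blast
    also have "\<dots> \<le> lpnorm M p (\<lambda>x. f x - h x)" using minimizerD[OF g h] unfolding g0_def .
    finally show "lpnorm M p (\<lambda>x. f x - G b x) \<le> lpnorm M p (\<lambda>x. f x - h x)" .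
  qed
  have m2: "is_pth_mean M p f (C i) (b i)" if i: "i \<in> {1..q}" for i
  proof (rule ccontr)
    assume nm: "\<not> is_pth_mean M p f (C i) (b i)"
    then obtain c where c: "(LINT x:C i|M. \<bar>f x - c\<bar> powr p) < (LINT x:C i|M. \<bar>f x - b i\<bar> powr p)"
      unfolding is_pth_mean_def by (auto simp: not_le)
    define b' where "b' = b(i := c)"
    have "I b' < I b"
    proof -
      have rest: "(\<Sum>j\<in>{1..q}-{i}. LINT x:C j|M. \<bar>f x - b' j\<bar> powr p) = (\<Sum>j\<in>{1..q}-{i}. LINT x:C j|M. \<bar>f x - b j\<bar> powr p)"
        unfolding b'_def by (intro sum.cong) auto
      have "I b' = (LINT x:C i|M. \<bar>f x - c\<bar> powr p) + (\<Sum>j\<in>{1..q}-{i}. LINT x:C j|M. \<bar>f x - b' j\<bar> powr p)"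
        unfolding Isplit using sum.remove[of "{1..q}" i "\<lambda>j. LINT x:C j|M. \<bar>f x - b' j\<bar> powr p"] i
        by (simp add: b'_def)
      moreover have "I b = (LINT x:C i|M. \<bar>f x - b i\<bar> powr p) + (\<Sum>j\<in>{1..q}-{i}. LINT x:C j|M. \<bar>f x - b j\<bar> powr p)"
        unfolding Isplit using sum.remove[of "{1..q}" i "\<lambda>j. LINT x:C j|M. \<bar>f x - b j\<bar> powr p"] i
        by simp
      ultimately show ?thesis using c rest by simp
    qed
    moreover have "lpnorm M p (\<lambda>x. f x - G b x) \<le> lpnorm M p (\<lambda>x. f x - G b' x)"
      by (rule minimizerD[OF m1 Gk])
    then have "I b \<le> I b'" using lp_le unfolding I_def by blast
    ultimately show False by simp
  qed
  have m3: "is_minimizer M p q f (G (\<lambda>i. Mp M p f (C i)))"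
  proof (rule minimizerI[OF Gq])
    fix h assume h: "h \<in> Gset M p q"
    have hk: "h \<in> Gset M p k" using h qk unfolding Gset_def by (auto intro: le_trans)
    have "I (\<lambda>i. Mp M p f (C i)) \<le> I b"
      unfolding Isplit
    proof (rule sum_mono)
      fix i assume i: "i \<in> {1..q}"
      show "(LINT x:C i|M. \<bar>f x - Mp M p f (C i)\<bar> powr p) \<le> (LINT x:C i|M. \<bar>f x - b i\<bar> powr p)"
      proof (cases "measure M (C i) = 0")
        case True
        then show ?thesis using lint_null[OF fm Csets True] by simp
      next
        case False
        then have "0 < measure M (C i)" using measure_nonneg[of M "C i"] by linarith
        from Mp_mean[OF fm f p Csets this m2[OF i]]
        show ?thesis unfolding is_pth_mean_def by blast
      qed
    qed
    then have "lpnorm M p (\<lambda>x. f x - G (\<lambda>i. Mp M p f (C i)) x) \<le> lpnorm M p (\<lambda>x. f x - G b x)"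
      using lp_le unfolding I_def by blast
    also have "\<dots> \<le> lpnorm M p (\<lambda>x. f x - h x)" by (rule minimizerD[OF m1 hk])
    finally show "lpnorm M p (\<lambda>x. f x - G (\<lambda>i. Mp M p f (C i)) x) \<le> lpnorm M p (\<lambda>x. f x - h x)" .
  qed
  have m4: "\<forall>i\<in>{1..q}. measure M (C i) > 0" if minq: "\<forall>h. is_minimizer M p k f h \<longrightarrow> q \<le> card (h ` space M)"
  proof (rule ballI, rule ccontr)
    fix i assume i: "i \<in> {1..q}" and np: "\<not> 0 < measure M (C i)"
    then have z: "measure M (C i) = 0" using measure_nonneg[of M "C i"] by linarith
    show False
    proof (cases "q = 1")
      case True
      then have i1: "i = 1" using i by auto
      have "(\<Union>j\<in>{1..q}. C j) = space M" using Cp unfolding is_partition_def by blast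
      then have "C 1 = space M" using True by simp
      moreover have "A 1 \<subseteq> space M" using part_sets[OF A, of 1] True by (auto dest: sets.sets_into_space)
      ultimately have "measure M (A 1) \<le> measure M (C 1)"
        using Csets by (intro finite_measure.finite_measure_mono[OF fm]) auto
      then show False using Apos True z i1 by auto
    next
      case False
      then have q2: "2 \<le> q" using i by auto
      define i' where "i' = (if i = 1 then 2 else (1::nat))"
      have i': "i' \<in> {1..q}" "i' \<noteq> i" using q2 i unfolding i'_def by auto
      define b' where "b' = b(i := b i')"
      have "I b' = I b"
        unfolding Isplit
      proof (rule sum.cong[OF refl])
        fix j assume "j \<in> {1..q}"
        show "(LINT x:C j|M. \<bar>f x - b' j\<bar> powr p) = (LINT x:C j|M. \<bar>f x - b j\<bar> powr p)"
        proof (cases "j = i")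
          case True then show ?thesis using lint_null[OF fm Csets z] by simp
        next
          case False then show ?thesis unfolding b'_def by simp
        qed
      qed
      have "is_minimizer M p k f (G b')"
      proof (rule minimizerI[OF Gk])
        fix h assume h: "h \<in> Gset M p k"
        have "lpnorm M p (\<lambda>x. f x - G b' x) \<le> lpnorm M p (\<lambda>x. f x - G b x)"
          using lp_le \<open>I b' = I b\<close> unfolding I_def by simp
        also have "\<dots> \<le> lpnorm M p (\<lambda>x. f x - h x)" by (rule minimizerD[OF m1 h])
        finally show "lpnorm M p (\<lambda>x. f x - G b' x) \<le> lpnorm M p (\<lambda>x. f x - h x)" .
      qed
      then have qc: "q \<le> card (G b' ` space M)" using minq by blast
      have sub: "G b' ` space M \<subseteq> b ` ({1..q} - {i})"
      proof
        fix y assume "y \<in> G b' ` space M"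
        then obtain x where x: "x \<in> space M" "y = G b' x" by auto
        obtain j where j: "j \<in> {1..q}" "G b' x = b' j"
          using part_eval_space[OF Cp x(1), of b'] unfolding G_def by auto
        show "y \<in> b ` ({1..q} - {i})"
        proof (cases "j = i")
          case True then show ?thesis using x j i' unfolding b'_def by auto
        next
          case False then show ?thesis using x j unfolding b'_def by auto
        qed
      qed
      have "card (G b' ` space M) \<le> card (b ` ({1..q} - {i}))" by (rule card_mono[OF _ sub]) simp
      also have "\<dots> \<le> card ({1..q} - {i})" by (rule card_image_le) simp
      also have "\<dots> = q - 1" using i by simp
      finally show False using qc q2 by simp
    qed
  qed
  show ?thesis using m1 m2 m3 m4 unfolding G_def C_def by auto
qed

theorem theorem2p3:
  fixes M :: "'a measure" and p :: real and k :: nat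
  assumes "finite_measure M" and "1 \<le> p" and "1 \<le> k"
  shows "proximinal M p k \<and>
    (\<forall>f q b A.
       in_Lp M p f \<and> q \<le> k \<and> (\<forall>i\<in>{1..q}. \<forall>j\<in>{1..q}. i < j \<longrightarrow> b i < b j) \<and>
       is_partition M q A \<and> (\<forall>i\<in>{1..q}. measure M (A i) > 0) \<and>
       is_minimizer M p k f (\<lambda>x. \<Sum>i=1..q. b i * indicator (A i) x)
     \<longrightarrow>
       is_minimizer M p k f (\<lambda>x. \<Sum>i=1..q. b i * indicator (Cset M f b q i) x) \<and>
       (\<forall>i\<in>{1..q}. measure M (Cset M f b q i) > 0 \<longrightarrow> is_pth_mean M p f (Cset M f b q i) (b i)) \<and>
       is_minimizer M p q f (\<lambda>x. \<Sum>i=1..q. Mp M p f (Cset M f b q i) * indicator (Cset M f b q i) x) \<and>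
       ((\<forall>h. is_minimizer M p k f h \<longrightarrow> q \<le> card (h ` space M)) \<longrightarrow>
          (\<forall>i\<in>{1..q}. measure M (Cset M f b q i) > 0)))"
proof (rule conjI)
  show "proximinal M p k" by (rule proximinal_thm[OF assms])
next
  show "\<forall>f q b A.
       in_Lp M p f \<and> q \<le> k \<and> (\<forall>i\<in>{1..q}. \<forall>j\<in>{1..q}. i < j \<longrightarrow> b i < b j) \<and>
       is_partition M q A \<and> (\<forall>i\<in>{1..q}. measure M (A i) > 0) \<and>
       is_minimizer M p k f (\<lambda>x. \<Sum>i=1..q. b i * indicator (A i) x)
     \<longrightarrow>
       is_minimizer M p k f (\<lambda>x. \<Sum>i=1..q. b i * indicator (Cset M f b q i) x) \<and>
       (\<forall>i\<in>{1..q}. measure M (Cset M f b q i) > 0 \<longrightarrow> is_pth_mean M p f (Cset M f b q i) (b i)) \<and>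
       is_minimizer M p q f (\<lambda>x. \<Sum>i=1..q. Mp M p f (Cset M f b q i) * indicator (Cset M f b q i) x) \<and>
       ((\<forall>h. is_minimizer M p k f h \<longrightarrow> q \<le> card (h ` space M)) \<longrightarrow>
          (\<forall>i\<in>{1..q}. measure M (Cset M f b q i) > 0))"
    apply (intro allI impI)
    apply (elim conjE)
    apply (rule part2[OF assms])
    apply assumption+
    done
qed


end
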